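(* Let $T$ be a measure-preserving automorphism of a standard probability Borel space $(X,\mathcal{B},\mu)$, let $\{W_n\}_{n\in\mathbb{N}}$ be measurable subsets of $X$ and let $\{q_n\}_{n\in\mathbb{N}}$ be an increasing sequence of natural numbers. Then $\{q_n\}$ is a rigidity sequence for $T$ along $\{W_n\}$ if and only if for every $f\in L^1(X,\mathcal{B},\mu)$ we have $\chi_{W_n}(f\circ T^{q_n}-f)\to 0$ in measure.
   Context: $\{q_n\}$ is a rigidity sequence for $T$ along $\{W_n\}$ if $\mu((T^{-q_n}A\,\triangle\, A)\cap W_n)\to 0$ for every $A\in\mathcal{B}$. $\chi_W$ denotes the indicator function of $W$. *)

theory Defs
  imports "HOL-Probability.Probability"
begin

definition rigidity_seq_along ::
  "'a measure \<Rightarrow> ('a \<Rightarrow> 'a) \<Rightarrow> (nat \<Rightarrow> nat) \<Rightarrow> (nat \<Rightarrow> 'a set) \<Rightarrow> bool" where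
  "rigidity_seq_along M T q W \<longleftrightarrow>
     (\<forall>A \<in> sets M.
        (\<lambda>n. measure M (((((T ^^ q n) -` A \<inter> space M) - A) \<union> (A - ((T ^^ q n) -` A \<inter> space M)))
                          \<inter> W n)) \<longlonglongrightarrow> 0)"

definition mp_map :: "'a measure \<Rightarrow> ('a \<Rightarrow> 'a) \<Rightarrow> bool" where
  "mp_map M T \<longleftrightarrow> T \<in> measurable M M \<and> distr M M T = M"

definition tendsto_zero_in_measure :: "'a measure \<Rightarrow> (nat \<Rightarrow> 'a \<Rightarrow> real) \<Rightarrow> bool" where
  "tendsto_zero_in_measure M g \<longleftrightarrow>
     (\<forall>\<epsilon>>0. (\<lambda>n. measure M {x \<in> space M. \<epsilon> < \<bar>g n x\<bar>}) \<longlonglongrightarrow> 0)"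

end

theory Submission
  imports Defs
begin

lemma grid_point:
  fixes a b R e :: real
  assumes e: "e > 0" and ab: "a + e < b" and "\<bar>a\<bar> \<le> R" "\<bar>b\<bar> \<le> R"
  shows "\<exists>k::int. k \<in> {-(\<lceil>R/e\<rceil>+1)..\<lceil>R/e\<rceil>+1} \<and> a < of_int k * e \<and> of_int k * e \<le> b"
proof -
  define k where "k = \<lfloor>b/e\<rfloor>"
  have k1: "of_int k \<le> b/e" "b/e < of_int k + 1" unfolding k_def by linarith+
  have "of_int k * e \<le> b" using k1(1) e by (simp add: field_simps)
  moreover have "b < (of_int k + 1) * e" using k1(2) e by (simp add: field_simps)
  hence "a < of_int k * e" using ab by (simp add: algebra_simps)
  moreover have "of_int k \<le> R/e" using k1 \<open>\<bar>b\<bar> \<le> R\<close> e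
    by (smt (verit) divide_right_mono)
  hence "k \<le> \<lceil>R/e\<rceil>+1" by linarith
  moreover have "-R < of_int k * e" using \<open>a < of_int k * e\<close> \<open>\<bar>a\<bar> \<le> R\<close> by linarith
  hence "-R/e < of_int k" using e by (simp add: field_simps)
  hence "-(\<lceil>R/e\<rceil>+1) \<le> k" by linarith
  ultimately show ?thesis by auto
qed

lemma mp_map_funpow:
  assumes "mp_map M T"
  shows "mp_map M (T ^^ m)"
proof (induction m)
  case 0
  then show ?case by (simp add: mp_map_def distr_id[unfolded id_def])
next
  case (Suc m)
  have T: "T \<in> measurable M M" "distr M M T = M" using assms by (auto simp: mp_map_def)
  have S: "T ^^ m \<in> measurable M M" "distr M M (T ^^ m) = M" using Suc by (auto simp: mp_map_def)
  have "T ^^ Suc m = T \<circ> T ^^ m" by simp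
  moreover have "T \<circ> T ^^ m \<in> measurable M M" using T S by (simp add: measurable_comp)
  moreover have "distr M M (T \<circ> T ^^ m) = M"
    using distr_distr[OF T(1) S(1)] T S by simp
  ultimately show ?case by (simp add: mp_map_def comp_def)
qed

theorem lemma3p2:
  fixes M :: "'a::polish_space measure"
    and T :: "'a \<Rightarrow> 'a"
    and W :: "nat \<Rightarrow> 'a set"
    and q :: "nat \<Rightarrow> nat"
  assumes "prob_space M"
    and "sets M = sets borel"
    and "bij T"
    and "mp_map M T"
    and "mp_map M (inv T)"
    and "\<And>n. W n \<in> sets M"
    and "strict_mono q"
  shows "rigidity_seq_along M T q W \<longleftrightarrow>
         (\<forall>f :: 'a \<Rightarrow> real. integrable M f \<longrightarrow>
            tendsto_zero_in_measure M
              (\<lambda>n x. indicator (W n) x * (f ((T ^^ q n) x) - f x)))"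
proof -
  interpret prob_space M by fact
  have sp: "space M = UNIV" using sets_eq_imp_space_eq[OF assms(2)] by simp
  have Smp: "T ^^ m \<in> measurable M M" "distr M M (T ^^ m) = M" for m
    using mp_map_funpow[OF assms(4)] by (auto simp: mp_map_def)
  have Wm: "W n \<in> sets M" for n by fact
  show ?thesis
  proof
    assume rig: "rigidity_seq_along M T q W"
    show "\<forall>f :: 'a \<Rightarrow> real. integrable M f \<longrightarrow>
            tendsto_zero_in_measure M
              (\<lambda>n x. indicator (W n) x * (f ((T ^^ q n) x) - f x))"
    proof (intro allI impI)
      fix f :: "'a \<Rightarrow> real"
      assume "integrable M f"
      hence fm[measurable]: "f \<in> borel_measurable M" by auto
      show "tendsto_zero_in_measure M (\<lambda>n x. indicator (W n) x * (f ((T ^^ q n) x) - f x))"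
        unfolding tendsto_zero_in_measure_def
      proof (intro allI impI)
        fix \<epsilon> :: real assume \<epsilon>: "\<epsilon> > 0"
        show "(\<lambda>n. measure M {x \<in> space M. \<epsilon> < \<bar>indicator (W n) x * (f ((T ^^ q n) x) - f x)\<bar>}) \<longlonglongrightarrow> 0"
        proof (rule LIMSEQ_I)
          fix e :: real assume e: "e > 0"
          define B where "B N = {x\<in>space M. real N < \<bar>f x\<bar>}" for N :: nat
          have Bm: "B N \<in> sets M" for N unfolding B_def by measurable
          have "(\<lambda>N. measure M (B N)) \<longlonglongrightarrow> measure M (\<Inter>N. B N)"
            apply (rule finite_Lim_measure_decseq)
            using Bm apply blast
            unfolding decseq_def B_def by auto
          moreover have "(\<Inter>N. B N) = {}"
          proof -
            have "x \<notin> B (nat \<lceil>\<bar>f x\<bar>\<rceil>)" for x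
              proof -
                have "\<bar>f x\<bar> \<le> real (nat \<lceil>\<bar>f x\<bar>\<rceil>)" by linarith
                have "\<bar>f x\<bar> \<le> real_of_int \<lceil>\<bar>f x\<bar>\<rceil>" by (rule le_of_int_ceiling)
                thus ?thesis unfolding B_def by (simp add: not_less)
              qed
            thus ?thesis by blast
          qed
          ultimately have "(\<lambda>N. measure M (B N)) \<longlonglongrightarrow> 0" by simp
          then obtain N where N: "measure M (B N) < e/3"
            using e by (metis (no_types, lifting) LIMSEQ_D diff_zero divide_pos_pos
                measure_nonneg real_norm_def zero_less_numeral abs_of_nonneg order_refl)
          define R where "R = real N"
          define K where "K = {-(\<lceil>R/\<epsilon>\<rceil>+1)..\<lceil>R/\<epsilon>\<rceil>+1}"
          have finK: "finite K" unfolding K_def by simp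
          define A where "A k = {x\<in>space M. of_int k * \<epsilon> \<le> f x}" for k :: int
          have Am: "A k \<in> sets M" for k unfolding A_def by measurable
          define D where "D n k = (((((T ^^ q n) -` A k \<inter> space M) - A k) \<union> (A k - ((T ^^ q n) -` A k \<inter> space M)))
                          \<inter> W n)" for n k
          have Dm: "D n k \<in> sets M" for n k unfolding D_def
            using Am Wm measurable_sets[OF Smp(1) Am] by blast
          have "(\<lambda>n. measure M (D n k)) \<longlonglongrightarrow> 0" for k
            using rig Am unfolding rigidity_seq_along_def D_def by blast
          hence "(\<lambda>n. \<Sum>k\<in>K. measure M (D n k)) \<longlonglongrightarrow> (\<Sum>k\<in>K. 0)"
            by (intro tendsto_sum) auto
          hence "(\<lambda>n. \<Sum>k\<in>K. measure M (D n k)) \<longlonglongrightarrow> 0" by simp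
          then obtain n0 where n0: "\<And>n. n \<ge> n0 \<Longrightarrow> norm (\<Sum>k\<in>K. measure M (D n k)) < e/3"
            using e by (metis LIMSEQ_D diff_zero divide_pos_pos zero_less_numeral)
          show "\<exists>no. \<forall>n\<ge>no. norm (measure M {x \<in> space M. \<epsilon> < \<bar>indicator (W n) x * (f ((T ^^ q n) x) - f x)\<bar>} - 0) < e"
          proof (intro exI allI impI)
            fix n assume n: "n \<ge> n0"
            let ?S = "T ^^ q n"
            let ?G = "{x \<in> space M. \<epsilon> < \<bar>indicator (W n) x * (f (?S x) - f x)\<bar>}"
            let ?P = "?S -` B N \<inter> space M"
            have Pm: "?P \<in> sets M" using measurable_sets[OF Smp(1) Bm] .
            have Pmeas: "measure M ?P = measure M (B N)"
              using measure_distr[OF Smp(1) Bm, of "q n"] Smp(2)[of "q n"] by simp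
            have sub: "?G \<subseteq> (\<Union>k\<in>K. D n k) \<union> B N \<union> ?P"
            proof
              fix x assume x: "x \<in> ?G"
              hence x': "\<epsilon> < \<bar>indicator (W n) x * (f (?S x) - f x)\<bar>" by simp
              have xW: "x \<in> W n"
              proof (rule ccontr)
                assume "x \<notin> W n" thus False using x' \<epsilon> by simp
              qed
              hence big: "\<epsilon> < \<bar>f (?S x) - f x\<bar>" using x' by simp
              show "x \<in> (\<Union>k\<in>K. D n k) \<union> B N \<union> ?P"
              proof (cases "\<bar>f x\<bar> \<le> R \<and> \<bar>f (?S x)\<bar> \<le> R")
                case False
                thus ?thesis unfolding B_def R_def sp by auto
              next
                case True
                show ?thesis
                proof (cases "f x < f (?S x)")
                  case lt: True
                  then obtain k where k: "k \<in> K" "f x < of_int k * \<epsilon>" "of_int k * \<epsilon> \<le> f (?S x)"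
                    using grid_point[OF \<epsilon>, of "f x" "f (?S x)" R] True big unfolding K_def by auto
                  hence "x \<in> D n k" unfolding D_def A_def sp using xW by auto
                  thus ?thesis using k by auto
                next
                  case ge: False
                  then obtain k where k: "k \<in> K" "f (?S x) < of_int k * \<epsilon>" "of_int k * \<epsilon> \<le> f x"
                    using grid_point[OF \<epsilon>, of "f (?S x)" "f x" R] True big unfolding K_def by auto
                  hence "x \<in> D n k" unfolding D_def A_def sp using xW by auto
                  thus ?thesis using k by auto
                qed
              qed
            qed
            have UDm: "(\<Union>k\<in>K. D n k) \<in> sets M" using Dm finK by blast
            have "measure M ?G \<le> measure M ((\<Union>k\<in>K. D n k) \<union> B N \<union> ?P)"
              by (rule finite_measure_mono[OF sub]) (use UDm Bm Pm in blast)
            also have "\<dots> \<le> measure M ((\<Union>k\<in>K. D n k) \<union> B N) + measure M ?P"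
              by (rule measure_Un_le) (use UDm Bm Pm in auto)
            also have "\<dots> \<le> measure M (\<Union>k\<in>K. D n k) + measure M (B N) + measure M ?P"
              using measure_Un_le[OF UDm Bm] by simp
            also have "\<dots> \<le> (\<Sum>k\<in>K. measure M (D n k)) + measure M (B N) + measure M (B N)"
              using finite_measure_subadditive_finite[OF finK, of "D n"] Dm Pmeas by auto
            also have "\<dots> < e" using n0[OF n] N by simp
            finally show "norm (measure M ?G - 0) < e" by simp
          qed
        qed
      qed
    qed
  next
    assume H: "\<forall>f :: 'a \<Rightarrow> real. integrable M f \<longrightarrow>
            tendsto_zero_in_measure M
              (\<lambda>n x. indicator (W n) x * (f ((T ^^ q n) x) - f x))"
    show "rigidity_seq_along M T q W"
      unfolding rigidity_seq_along_def
    proof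
      fix A assume A: "A \<in> sets M"
      have "integrable M (indicator A :: 'a \<Rightarrow> real)"
        using A by (intro integrable_real_indicator) (auto simp: emeasure_eq_measure)
      hence "tendsto_zero_in_measure M (\<lambda>n x. indicator (W n) x * ((indicator A :: 'a \<Rightarrow> real) ((T ^^ q n) x) - indicator A x))"
        using H by blast
      hence L: "(\<lambda>n. measure M {x \<in> space M. 1/2 < \<bar>indicator (W n) x * ((indicator A :: 'a \<Rightarrow> real) ((T ^^ q n) x) - indicator A x)\<bar>}) \<longlonglongrightarrow> 0"
        unfolding tendsto_zero_in_measure_def by (auto dest: spec[where x="1/2::real"])
      have eq: "{x \<in> space M. 1/2 < \<bar>indicator (W n) x * ((indicator A :: 'a \<Rightarrow> real) ((T ^^ q n) x) - indicator A x)\<bar>}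
         = ((((T ^^ q n) -` A \<inter> space M) - A) \<union> (A - ((T ^^ q n) -` A \<inter> space M))) \<inter> W n" for n
        unfolding sp by (auto simp: indicator_def split: if_splits)
      show "(\<lambda>n. measure M (((((T ^^ q n) -` A \<inter> space M) - A) \<union> (A - ((T ^^ q n) -` A \<inter> space M))) \<inter> W n)) \<longlonglongrightarrow> 0"
        using L unfolding eq .
    qed
  qed
qed

end
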